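(* Let $j>0$, $\delta>0$ and $u,v\in\mathcal U_\delta$. Then $$F\big(0;|K^{(\delta)}u-K^{(\delta)}v|\big)\le F\big(0;|u-v|\big),\qquad F\big(0;|K^{(\delta)}u-u|\big)\le 2j\delta.$$
   Context: For a positive measure $\mu$ on $[0,1]$, $F(r;\mu)=\mu([r,1])$. $\mathcal U$ = measures $u=c_uD_0+\rho_u(r)dr$ with $c_u\ge0$, $\rho_u\in L^\infty([0,1],\mathbb R_+)$, $D_0$ the Dirac mass at $0$. For $u,v\in\mathcal U$, $|u-v|=|c_u-c_v|D_0+|\rho_u-\rho_v|$ (so $F(0;|u-v|)=|c_u-c_v|+\int_0^1|\rho_u-\rho_v|$). $\mathcal U_\delta=\{u\in\mathcal U:\int_0^1\rho_u>j\delta\}$, and $K^{(\delta)}u=j\delta D_0+\mathbf 1_{[0,R_\delta(u)]}u$ with $R_\delta(u)=\inf\{r:F(r;u)=j\delta\}$. *)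

theory Defs
  imports "HOL-Analysis.Analysis"
begin

text \<open>A measure u = c_u D_0 + rho_u(r) dr on [0,1] is represented by the pair (c_u, rho_u).\<close>
type_synonym umeas = "real \<times> (real \<Rightarrow> real)"

definition cU :: "umeas \<Rightarrow> real" where "cU u = fst u"
definition rhoU :: "umeas \<Rightarrow> real \<Rightarrow> real" where "rhoU u = snd u"

definition in_U :: "umeas \<Rightarrow> bool" where
  "in_U u \<longleftrightarrow> cU u \<ge> 0
     \<and> set_borel_measurable lborel {0..1} (rhoU u)
     \<and> (\<exists>B. AE x in lborel. x \<in> {0..1} \<longrightarrow> 0 \<le> rhoU u x \<and> rhoU u x \<le> B)"

text \<open>F(r;u) = u([r,1]) : the Dirac mass at 0 lies in [r,1] iff r \<le> 0.\<close>
definition FU :: "real \<Rightarrow> umeas \<Rightarrow> real" where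
  "FU r u = (if r \<le> 0 then cU u else 0) + (LBINT x:{r..1}. rhoU u x)"

definition absdiffU :: "umeas \<Rightarrow> umeas \<Rightarrow> umeas" where
  "absdiffU u v = (\<bar>cU u - cU v\<bar>, \<lambda>x. \<bar>rhoU u x - rhoU v x\<bar>)"

definition U_delta :: "real \<Rightarrow> real \<Rightarrow> umeas set" where
  "U_delta j \<delta> = {u. in_U u \<and> (LBINT x:{0..1}. rhoU u x) > j * \<delta>}"

definition R_delta :: "real \<Rightarrow> real \<Rightarrow> umeas \<Rightarrow> real" where
  "R_delta j \<delta> u = Inf {r \<in> {0..1}. FU r u = j * \<delta>}"

text \<open>K u = j\<delta> D_0 + 1_{[0,R]} u; the Dirac mass at 0 of u lies in [0,R] and is kept.\<close>
definition K_delta :: "real \<Rightarrow> real \<Rightarrow> umeas \<Rightarrow> umeas" where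
  "K_delta j \<delta> u = (j * \<delta> + cU u, \<lambda>x. indicator {0..R_delta j \<delta> u} x * rhoU u x)"

end

theory Submission
  imports Defs
begin

lemma int_rho:
  assumes "in_U u"
  shows "set_integrable lborel {0..1::real} (rhoU u)"
proof -
  obtain B where B: "AE x in lborel. x \<in> {0..1} \<longrightarrow> 0 \<le> rhoU u x \<and> rhoU u x \<le> B"
    and m: "set_borel_measurable lborel {0..1} (rhoU u)"
    using assms unfolding in_U_def by blast
  have c: "set_integrable lborel {0..1::real} (\<lambda>x. B)"
    unfolding set_integrable_def
    using borel_integrable_atLeastAtMost[of 0 1 "\<lambda>x. B"]
    by (simp add: mult.commute)
  show ?thesis
    by (rule set_integrable_bound[OF c m]) (use B in \<open>eventually_elim, auto\<close>)
qed

lemma nonneg_rho: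
  assumes "in_U u"
  shows "AE x in lborel. x \<in> {0..1::real} \<longrightarrow> 0 \<le> rhoU u x"
proof -
  obtain B where B: "AE x in lborel. x \<in> {0..1} \<longrightarrow> 0 \<le> rhoU u x \<and> rhoU u x \<le> B"
    using assms unfolding in_U_def by blast
  show ?thesis using B by eventually_elim auto
qed

lemma ind_int:
  fixes f :: "real \<Rightarrow> real"
  assumes "set_integrable lborel A f" "B \<in> sets lborel"
  shows "set_integrable lborel A (\<lambda>x. indicator B x * f x)"
proof -
  have "integrable lborel (\<lambda>x. indicator B x *\<^sub>R (indicator A x *\<^sub>R f x))"
    using integrable_mult_indicator[OF assms(2)] assms(1) unfolding set_integrable_def by blast
  moreover have "(\<lambda>x. indicator B x *\<^sub>R (indicator A x *\<^sub>R f x)) = (\<lambda>x. indicator A x *\<^sub>R (indicator B x * f x))"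
    by (auto simp: indicator_def)
  ultimately show ?thesis unfolding set_integrable_def by simp
qed

lemma sub_int:
  fixes f :: "real \<Rightarrow> real"
  assumes "0 \<le> r"
  shows "(LBINT x:{0..1}. indicator {r..1} x * f x) = (LBINT x:{r..1}. f x)"
  unfolding set_lebesgue_integral_def
  by (rule Bochner_Integration.integral_cong) (use assms in \<open>auto simp: indicator_def\<close>)

lemma R_props:
  assumes u: "in_U u" and pos: "(c::real) > 0" and big: "(LBINT x:{0..1}. rhoU u x) > c"
  shows "0 < Inf {r \<in> {0..1}. FU r u = c} \<and> Inf {r \<in> {0..1}. FU r u = c} \<le> 1
     \<and> (LBINT x:{Inf {r \<in> {0..1}. FU r u = c}..1}. rhoU u x) = c"
proof -
  let ?f = "rhoU u"
  define h where "h r = integral {r..1} ?f" for r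
  have I: "set_integrable lborel {0..1::real} ?f" by (rule int_rho[OF u])
  have hi: "(LBINT x:{r..1}. ?f x) = h r" if "r \<in> {0..1}" for r
  proof -
    have "set_integrable lborel {r..1} ?f"
      by (rule set_integrable_subset[OF I]) (use that in auto)
    then show ?thesis unfolding h_def by (rule set_borel_integral_eq_integral(2))
  qed
  have cont: "continuous_on {0..1} h"
    unfolding h_def
    by (rule indefinite_integral_continuous_1'[OF set_borel_integral_eq_integral(1)[OF I]])
  have h1: "h 1 = 0" unfolding h_def by simp
  have h0: "h 0 > c" using big hi[of 0] by simp
  have c0: "cU u \<ge> 0" using u unfolding in_U_def by simp
  define S where "S = {r \<in> {0..1}. FU r u = c}"
  define S' where "S' = {r \<in> {0..1::real}. h r = c}"
  have FUeq: "FU r u = h r" if "r \<in> {0..1}" "r > 0" for r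
    using that hi[OF that(1)] unfolding FU_def by simp
  have FU0: "FU 0 u > c" using h0 c0 hi[of 0] unfolding FU_def by simp
  have SS: "S \<subseteq> S'"
  proof
    fix r assume r: "r \<in> S"
    then have "r \<noteq> 0" using FU0 unfolding S_def by auto
    with r show "r \<in> S'" using FUeq unfolding S_def S'_def by auto
  qed
  obtain x where x: "0 \<le> x" "x \<le> 1" "h x = c"
    using IVT2'[of h 1 c 0] cont h1 h0 pos by auto
  have "x \<noteq> 0" using x h0 by auto
  then have "x \<in> S" using x FUeq unfolding S_def by auto
  then have ne: "S \<noteq> {}" by auto
  have bdd: "bdd_below S" unfolding S_def by (auto intro: bdd_belowI[of _ 0])
  have cl: "closed S'" unfolding S'_def
    by (rule continuous_closed_preimage_constant[OF cont]) auto
  have "Inf S \<in> closure S" by (rule closure_contains_Inf[OF ne bdd])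
  also have "\<dots> \<subseteq> S'" using closure_minimal[OF SS cl] .
  finally have R: "Inf S \<in> S'" .
  then have "Inf S \<noteq> 0" using h0 unfolding S'_def by auto
  with R show ?thesis using hi unfolding S_def[symmetric] S'_def by auto
qed

lemma key_ineq:
  fixes f g :: "real \<Rightarrow> real"
  assumes If: "set_integrable lborel {0..1} f" and Ig: "set_integrable lborel {0..1} g"
    and nf: "AE x in lborel. x \<in> {0..1} \<longrightarrow> 0 \<le> f x"
    and ng: "AE x in lborel. x \<in> {0..1} \<longrightarrow> 0 \<le> g x"
    and ab: "0 < a" "a \<le> b" "b \<le> 1"
    and eq: "(LBINT x:{a..1}. f x) = (LBINT x:{b..1}. g x)"
  shows "(LBINT x:{0..1}. \<bar>indicator {0..a} x * f x - indicator {0..b} x * g x\<bar>)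
         \<le> (LBINT x:{0..1}. \<bar>f x - g x\<bar>)"
proof -
  let ?L = "\<lambda>x. \<bar>indicator {0..a} x * f x - indicator {0..b} x * g x\<bar>"
  have IL: "set_integrable lborel {0..1} ?L"
    by (intro set_integrable_abs set_integral_diff(1) ind_int If Ig) auto
  have IH: "set_integrable lborel {0..1} (\<lambda>x. \<bar>f x - g x\<bar>)"
    by (intro set_integrable_abs set_integral_diff(1) If Ig)
  have ID: "set_integrable lborel {0..1} (\<lambda>x. indicator {b..1} x * g x)"
    by (intro ind_int Ig) auto
  have IC: "set_integrable lborel {0..1} (\<lambda>x. indicator {a..1} x * f x)"
    by (intro ind_int If) auto
  have "(LBINT x:{0..1}. ?L x + indicator {b..1} x * g x)
        \<le> (LBINT x:{0..1}. \<bar>f x - g x\<bar> + indicator {a..1} x * f x)"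
  proof (rule set_integral_mono_AE)
    show "set_integrable lborel {0..1} (\<lambda>x. ?L x + indicator {b..1} x * g x)"
      by (rule set_integral_add(1)[OF IL ID])
    show "set_integrable lborel {0..1} (\<lambda>x. \<bar>f x - g x\<bar> + indicator {a..1} x * f x)"
      by (rule set_integral_add(1)[OF IH IC])
    show "AE x\<in>{0..1} in lborel. ?L x + indicator {b..1} x * g x
           \<le> \<bar>f x - g x\<bar> + indicator {a..1} x * f x"
      using nf ng AE_lborel_singleton[of a] AE_lborel_singleton[of b]
    proof eventually_elim
      case (elim x)
      show ?case
      proof
        assume x: "x \<in> {0..1}"
        then have "0 \<le> f x" "0 \<le> g x" using elim by auto
        then show "?L x + indicator {b..1} x * g x \<le> \<bar>f x - g x\<bar> + indicator {a..1} x * f x"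
          using x elim ab by (auto simp: indicator_def)
      qed
    qed
  qed
  moreover have "(LBINT x:{0..1}. ?L x + indicator {b..1} x * g x)
      = (LBINT x:{0..1}. ?L x) + (LBINT x:{b..1}. g x)"
    using set_integral_add(2)[OF IL ID] sub_int[of b g] ab by simp
  moreover have "(LBINT x:{0..1}. \<bar>f x - g x\<bar> + indicator {a..1} x * f x)
      = (LBINT x:{0..1}. \<bar>f x - g x\<bar>) + (LBINT x:{a..1}. f x)"
    using set_integral_add(2)[OF IH IC] sub_int[of a f] ab by simp
  ultimately show ?thesis using eq by simp
qed

theorem mainTheorem12:
  fixes j \<delta> :: real and u v :: umeas
  assumes "j > 0" and "\<delta> > 0"
    and "u \<in> U_delta j \<delta>" and "v \<in> U_delta j \<delta>"
  shows "FU 0 (absdiffU (K_delta j \<delta> u) (K_delta j \<delta> v)) \<le> FU 0 (absdiffU u v)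
         \<and> FU 0 (absdiffU (K_delta j \<delta> u) u) \<le> 2 * j * \<delta>"
proof -
  have pos: "j * \<delta> > 0" using assms by simp
  have uU: "in_U u" and ub: "(LBINT x:{0..1}. rhoU u x) > j * \<delta>"
    using assms(3) unfolding U_delta_def by auto
  have vU: "in_U v" and vb: "(LBINT x:{0..1}. rhoU v x) > j * \<delta>"
    using assms(4) unfolding U_delta_def by auto
  define Ru where "Ru = R_delta j \<delta> u"
  define Rv where "Rv = R_delta j \<delta> v"
  have Ru: "0 < Ru" "Ru \<le> 1" "(LBINT x:{Ru..1}. rhoU u x) = j * \<delta>"
    using R_props[OF uU pos ub] unfolding Ru_def R_delta_def by auto
  have Rv: "0 < Rv" "Rv \<le> 1" "(LBINT x:{Rv..1}. rhoU v x) = j * \<delta>"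
    using R_props[OF vU pos vb] unfolding Rv_def R_delta_def by auto
  have FU0: "FU 0 w = cU w + (LBINT x:{0..1}. rhoU w x)" for w
    unfolding FU_def by simp
  let ?f = "rhoU u" and ?g = "rhoU v"
  have If: "set_integrable lborel {0..1} ?f" by (rule int_rho[OF uU])
  have Ig: "set_integrable lborel {0..1} ?g" by (rule int_rho[OF vU])
  have nf: "AE x in lborel. x \<in> {0..1} \<longrightarrow> 0 \<le> ?f x" by (rule nonneg_rho[OF uU])
  have ng: "AE x in lborel. x \<in> {0..1} \<longrightarrow> 0 \<le> ?g x" by (rule nonneg_rho[OF vU])
  have part1: "(LBINT x:{0..1}. \<bar>indicator {0..Ru} x * ?f x - indicator {0..Rv} x * ?g x\<bar>)
         \<le> (LBINT x:{0..1}. \<bar>?f x - ?g x\<bar>)"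
  proof (cases "Ru \<le> Rv")
    case True
    show ?thesis by (rule key_ineq[OF If Ig nf ng Ru(1) True Rv(2)]) (simp add: Ru(3) Rv(3))
  next
    case False
    have "(LBINT x:{0..1}. \<bar>indicator {0..Rv} x * ?g x - indicator {0..Ru} x * ?f x\<bar>)
         \<le> (LBINT x:{0..1}. \<bar>?g x - ?f x\<bar>)"
      by (rule key_ineq[OF Ig If ng nf Rv(1) _ Ru(2)]) (use False in \<open>simp_all add: Ru(3) Rv(3)\<close>)
    moreover have "(\<lambda>x. \<bar>indicator {0..Rv} x * ?g x - indicator {0..Ru} x * ?f x\<bar>)
       = (\<lambda>x. \<bar>indicator {0..Ru} x * ?f x - indicator {0..Rv} x * ?g x\<bar>)"
      by (simp add: abs_minus_commute)
    moreover have "(\<lambda>x. \<bar>?g x - ?f x\<bar>) = (\<lambda>x. \<bar>?f x - ?g x\<bar>)"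
      by (simp add: abs_minus_commute)
    ultimately show ?thesis by simp
  qed
  have c1: "\<bar>j * \<delta> + cU u - (j * \<delta> + cU v)\<bar> = \<bar>cU u - cU v\<bar>" by simp
  have A: "FU 0 (absdiffU (K_delta j \<delta> u) (K_delta j \<delta> v)) \<le> FU 0 (absdiffU u v)"
    unfolding FU0 absdiffU_def K_delta_def cU_def rhoU_def
    using part1 unfolding Ru_def Rv_def cU_def rhoU_def by simp
  have part2: "(LBINT x:{0..1}. \<bar>indicator {0..Ru} x * ?f x - ?f x\<bar>) \<le> j * \<delta>"
  proof -
    have "(LBINT x:{0..1}. \<bar>indicator {0..Ru} x * ?f x - ?f x\<bar>)
        \<le> (LBINT x:{0..1}. indicator {Ru..1} x * ?f x)"
    proof (rule set_integral_mono_AE)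
      show "set_integrable lborel {0..1} (\<lambda>x. \<bar>indicator {0..Ru} x * ?f x - ?f x\<bar>)"
        by (intro set_integrable_abs set_integral_diff(1) ind_int If) auto
      show "set_integrable lborel {0..1} (\<lambda>x. indicator {Ru..1} x * ?f x)"
        by (intro ind_int If) auto
      show "AE x\<in>{0..1} in lborel. \<bar>indicator {0..Ru} x * ?f x - ?f x\<bar> \<le> indicator {Ru..1} x * ?f x"
        using nf AE_lborel_singleton[of Ru]
      proof eventually_elim
        case (elim x)
        then show ?case by (auto simp: indicator_def)
      qed
    qed
    also have "\<dots> = j * \<delta>" using sub_int[of Ru ?f] Ru by simp
    finally show ?thesis .
  qed
  have B: "FU 0 (absdiffU (K_delta j \<delta> u) u) \<le> 2 * j * \<delta>"
    unfolding FU0 absdiffU_def K_delta_def cU_def rhoU_def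
    using part2 pos unfolding Ru_def cU_def rhoU_def by (simp add: mult.commute)
  show ?thesis using A B by simp
qed

end
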